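(* Let $p$ be an odd prime, $H\cong\mathbb{Z}_p^3$, and $\mathcal A$ an exceptional S-ring over $H$. Then $|\mathrm{Aut}(\mathcal A)|=p^4$ and $\mathrm{Iso}_1(\mathcal A)=\mathrm{Aut}(H)$.
   Context: $H$ is written additively (identity denoted $1$ in $\mathrm{Iso}_1$ means the zero element). $\mathrm{Cay}(H,S)$ is the digraph on $H$ with arcs $(x,x+s)$, $s\in S$. An S-ring over $H$ is a subalgebra $\mathcal A\subseteq\mathbb{Q}H$ spanned by $\underline{T}=\sum_{t\in T}t$ for $T$ in a partition $\mathrm{Bs}(\mathcal A)$ of $H$ (basic sets) with $\{0\}\in\mathrm{Bs}(\mathcal A)$ and $-T\in\mathrm{Bs}(\mathcal A)$ for all $T$. Two S-rings over groups $H,K$ are Cayley isomorphic if some group isomorphism $H\to K$ maps the basic sets of the first onto the basic sets of the second. $\mathcal A$ is exceptional if it is Cayley isomorphic to the S-ring over $\mathbb{Z}_p^3$ whose basic sets are the orbits of the cyclic group generated by the linear map given by the matrix $\begin{pmatrix}1&1&0\\0&1&1\\0&0&1\end{pmatrix}$. $\mathrm{Aut}(\mathcal A)=\bigcap_{T\in\mathrm{Bs}(\mathcal A)}\mathrm{Aut}(\mathrm{Cay}(H,T))$. $\mathrm{Iso}_1(\mathcal A)$ is the set of bijections $f:H\to H$ fixing $0$ such that $\{\mathrm{Cay}(H,T)^f:T\in\mathrm{Bs}(\mathcal A)\}=\{\mathrm{Cay}(H,S):S\in\mathrm{Bs}(\mathcal B)\}$ for some S-ring $\mathcal B$ over $H$.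 *)

theory Defs
  imports Main "HOL-Computational_Algebra.Primes"
begin

definition cay :: "'a::ab_group_add set \<Rightarrow> ('a \<times> 'a) set" where
  "cay S = {(x, y). y - x \<in> S}"

text \<open>S-ring over the (finite) group UNIV, given by its set of basic sets Bs.
  Closure of the span under multiplication in QH is written out: the coefficient of z
  in the product of the sums of T1 and T2 is constant on each basic set.\<close>
definition is_Sring :: "'a::ab_group_add set set \<Rightarrow> bool" where
  "is_Sring Bs \<longleftrightarrow> finite (UNIV :: 'a set)
     \<and> (\<forall>T\<in>Bs. T \<noteq> {})
     \<and> (\<forall>T1\<in>Bs. \<forall>T2\<in>Bs. T1 \<noteq> T2 \<longrightarrow> T1 \<inter> T2 = {})
     \<and> \<Union>Bs = UNIV
     \<and> {0} \<in> Bs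
     \<and> (\<forall>T\<in>Bs. uminus ` T \<in> Bs)
     \<and> (\<forall>T1\<in>Bs. \<forall>T2\<in>Bs. \<forall>T\<in>Bs. \<forall>z\<in>T. \<forall>z'\<in>T.
          card {(x, y). x \<in> T1 \<and> y \<in> T2 \<and> x + y = z}
        = card {(x, y). x \<in> T1 \<and> y \<in> T2 \<and> x + y = z'})"

definition zp3 :: "nat \<Rightarrow> (nat \<times> nat \<times> nat) set" where
  "zp3 p = {(a, b, c). a < p \<and> b < p \<and> c < p}"

fun add3 :: "nat \<Rightarrow> nat \<times> nat \<times> nat \<Rightarrow> nat \<times> nat \<times> nat \<Rightarrow> nat \<times> nat \<times> nat" where
  "add3 p (a, b, c) (a', b', c') = ((a + a') mod p, (b + b') mod p, (c + c') mod p)"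

text \<open>The linear map with matrix ((1,1,0),(0,1,1),(0,0,1)) acting on column vectors.\<close>
fun exc_map :: "nat \<Rightarrow> nat \<times> nat \<times> nat \<Rightarrow> nat \<times> nat \<times> nat" where
  "exc_map p (a, b, c) = ((a + b) mod p, (b + c) mod p, c)"

definition exc_orbit :: "nat \<Rightarrow> nat \<times> nat \<times> nat \<Rightarrow> (nat \<times> nat \<times> nat) set" where
  "exc_orbit p v = {(exc_map p ^^ k) v | k. True}"

text \<open>Exceptional: Cayley isomorphic (via a group isomorphism H \<rightarrow> Z_p^3) to the orbit S-ring.\<close>
definition exceptional :: "nat \<Rightarrow> 'a::ab_group_add set set \<Rightarrow> bool" where
  "exceptional p Bs \<longleftrightarrow> (\<exists>\<phi>. bij_betw \<phi> (UNIV :: 'a set) (zp3 p)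
      \<and> (\<forall>x y. \<phi> (x + y) = add3 p (\<phi> x) (\<phi> y))
      \<and> (\<lambda>T. \<phi> ` T) ` Bs = exc_orbit p ` zp3 p)"

definition digraph_aut :: "('a \<times> 'a) set \<Rightarrow> ('a \<Rightarrow> 'a) set" where
  "digraph_aut E = {f. bij f \<and> (\<forall>x y. (x, y) \<in> E \<longleftrightarrow> (f x, f y) \<in> E)}"

definition Aut_Sring :: "'a::ab_group_add set set \<Rightarrow> ('a \<Rightarrow> 'a) set" where
  "Aut_Sring Bs = (\<Inter>T\<in>Bs. digraph_aut (cay T))"

definition Iso1 :: "'a::ab_group_add set set \<Rightarrow> ('a \<Rightarrow> 'a) set" where
  "Iso1 Bs = {f. bij f \<and> f 0 = 0 \<and>
     (\<exists>Bs'. is_Sring Bs' \<and> (\<lambda>T. map_prod f f ` cay T) ` Bs = cay ` Bs')}"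

definition group_aut :: "('a::ab_group_add \<Rightarrow> 'a) set" where
  "group_aut = {f. bij f \<and> (\<forall>x y. f (x + y) = f x + f y)}"

end

theory Submission imports Defs begin

definition Hn :: "int \<Rightarrow> int" where "Hn t = t * (t - 1) div 2"

lemma two_Hn: "2 * Hn t = t * t - t"
proof -
  have "even (t * (t - 1))" by simp
  then show ?thesis unfolding Hn_def by (simp add: algebra_simps)
qed

locale exc =
  fixes p :: nat and \<phi> :: "'a::ab_group_add \<Rightarrow> nat \<times> nat \<times> nat" and Bs :: "'a set set"
  assumes pr: "prime p" and od: "odd p"
    and bj: "bij_betw \<phi> UNIV (zp3 p)"
    and hom: "\<And>x y. \<phi> (x + y) = add3 p (\<phi> x) (\<phi> y)"
    and img: "(\<lambda>T. \<phi> ` T) ` Bs = exc_orbit p ` zp3 p"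
    and sr: "is_Sring Bs"
begin

abbreviation "P \<equiv> int p"

definition c1 :: "'a \<Rightarrow> int" where "c1 x = int (fst (\<phi> x))"
definition c2 :: "'a \<Rightarrow> int" where "c2 x = int (fst (snd (\<phi> x)))"
definition c3 :: "'a \<Rightarrow> int" where "c3 x = int (snd (snd (\<phi> x)))"

lemma p3: "p \<ge> 3"
proof -
  have "p \<ge> 2" using pr prime_ge_2_nat by blast
  moreover have "p \<noteq> 2" using od by auto
  ultimately show ?thesis by linarith
qed

lemma primeP: "prime P" using pr by simp

lemma cancel: "P dvd (c * y) \<Longrightarrow> \<not> P dvd c \<Longrightarrow> P dvd y"
  using primeP prime_dvd_mult_iff by blast

lemma cancel2: "P dvd (2 * y) \<Longrightarrow> P dvd y"
proof -
  assume a: "P dvd (2 * y)"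
  have "\<not> P dvd 2" using p3 by (auto dest!: zdvd_imp_le)
  then show ?thesis using cancel a by blast
qed

lemma fin: "finite (UNIV :: 'a set)" using sr unfolding is_Sring_def by simp

lemma injphi: "inj \<phi>" using bj bij_betw_def by blast

lemma phi_in: "\<phi> x \<in> zp3 p" using bij_betw_apply[OF bj] by blast

lemma c_range: "0 \<le> c1 x" "c1 x < P" "0 \<le> c2 x" "c2 x < P" "0 \<le> c3 x" "c3 x < P"
  using phi_in[of x] unfolding c1_def c2_def c3_def zp3_def by auto

lemma rng_eq: "0 \<le> a \<Longrightarrow> a < P \<Longrightarrow> 0 \<le> b \<Longrightarrow> b < P \<Longrightarrow> P dvd (a - b) \<Longrightarrow> a = (b::int)"
  by (metis mod_eq_dvd_iff mod_pos_pos_trivial)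

lemma eq_iff: "x = y \<longleftrightarrow> P dvd (c1 x - c1 y) \<and> P dvd (c2 x - c2 y) \<and> P dvd (c3 x - c3 y)"
proof
  assume "P dvd (c1 x - c1 y) \<and> P dvd (c2 x - c2 y) \<and> P dvd (c3 x - c3 y)"
  then have "c1 x = c1 y" "c2 x = c2 y" "c3 x = c3 y" using rng_eq c_range by blast+
  then have "\<phi> x = \<phi> y" unfolding c1_def c2_def c3_def by (simp add: prod_eq_iff)
  then show "x = y" using injphi by (simp add: inj_eq)
qed simp

lemma c_add: "P dvd (c1 (x + y) - (c1 x + c1 y))" "P dvd (c2 (x + y) - (c2 x + c2 y))"
  "P dvd (c3 (x + y) - (c3 x + c3 y))"
proof -
  obtain a b c where x: "\<phi> x = (a, b, c)" by (cases "\<phi> x") auto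
  obtain a' b' c' where y: "\<phi> y = (a', b', c')" by (cases "\<phi> y") auto
  have e: "\<phi> (x + y) = ((a + a') mod p, (b + b') mod p, (c + c') mod p)" using hom[of x y] x y by simp
  have m: "\<And>u v::nat. P dvd (int ((u + v) mod p) - (int u + int v))"
    by (metis mod_eq_dvd_iff mod_mod_trivial of_nat_add zmod_int)
  show "P dvd (c1 (x + y) - (c1 x + c1 y))" "P dvd (c2 (x + y) - (c2 x + c2 y))"
    "P dvd (c3 (x + y) - (c3 x + c3 y))" unfolding c1_def c2_def c3_def using e x y m by auto
qed

lemma c_zero: "c1 0 = 0" "c2 0 = 0" "c3 0 = 0"
proof -
  have "P dvd (c1 0 - 0)" "P dvd (c2 0 - 0)" "P dvd (c3 0 - 0)"
    using c_add[of 0 0] by (simp_all add: algebra_simps)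
  then show "c1 0 = 0" "c2 0 = 0" "c3 0 = 0" using rng_eq c_range p3 by auto
qed

lemma c_diff: "P dvd (c1 (x - y) - (c1 x - c1 y))" "P dvd (c2 (x - y) - (c2 x - c2 y))"
  "P dvd (c3 (x - y) - (c3 x - c3 y))"
proof -
  have "x = (x - y) + y" by simp
  then have a: "P dvd (c1 x - (c1 (x - y) + c1 y))" "P dvd (c2 x - (c2 (x - y) + c2 y))"
    "P dvd (c3 x - (c3 (x - y) + c3 y))" using c_add[of "x - y" y] by metis+
  have g: "\<And>X D Y::int. P dvd (X - (D + Y)) \<Longrightarrow> P dvd (D - (X - Y))"
  proof -
    fix X D Y :: int assume "P dvd (X - (D + Y))"
    moreover have "D - (X - Y) = - (X - (D + Y))" by simp
    ultimately show "P dvd (D - (X - Y))" by (metis dvd_minus_iff)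
  qed
  show "P dvd (c1 (x - y) - (c1 x - c1 y))" by (rule g[OF a(1)])
  show "P dvd (c2 (x - y) - (c2 x - c2 y))" by (rule g[OF a(2)])
  show "P dvd (c3 (x - y) - (c3 x - c3 y))" by (rule g[OF a(3)])
qed



definition pt :: "int \<Rightarrow> int \<Rightarrow> int \<Rightarrow> 'a" where
  "pt a b c = inv_into UNIV \<phi> (nat (a mod P), nat (b mod P), nat (c mod P))"

lemma c_pt: "P dvd (c1 (pt a b c) - a)" "P dvd (c2 (pt a b c) - b)" "P dvd (c3 (pt a b c) - c)"
proof -
  have m: "\<And>u. nat (u mod P) < p"
  proof -
    fix u :: int
    have P0: "0 < P" using p3 by simp
    have "u mod P < P" "0 \<le> u mod P" using pos_mod_bound[OF P0] pos_mod_sign[OF P0] by blast+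
    then show "nat (u mod P) < p" by (simp add: nat_less_iff)
  qed
  have inz: "(nat (a mod P), nat (b mod P), nat (c mod P)) \<in> zp3 p" unfolding zp3_def using m
    by blast
  then have "(nat (a mod P), nat (b mod P), nat (c mod P)) \<in> range \<phi>"
    using bij_betw_imp_surj_on[OF bj] by simp
  then have "\<phi> (pt a b c) = (nat (a mod P), nat (b mod P), nat (c mod P))"
    unfolding pt_def by (rule f_inv_into_f)
  then have "c1 (pt a b c) = a mod P" "c2 (pt a b c) = b mod P" "c3 (pt a b c) = c mod P"
    unfolding c1_def c2_def c3_def using p3 by simp_all
  then show "P dvd (c1 (pt a b c) - a)" "P dvd (c2 (pt a b c) - b)" "P dvd (c3 (pt a b c) - c)"
    by (simp_all add: mod_eq_dvd_iff[symmetric])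
qed


lemma modsum: "P dvd (int ((u + v) mod p) - (int u + int v))"
  by (metis mod_eq_dvd_iff mod_mod_trivial of_nat_add zmod_int)

lemma iter_cong:
  assumes "(a, b, c) \<in> zp3 p"
  shows "\<exists>a' b' h. (exc_map p ^^ k) (a, b, c) = (a', b', c) \<and> (a', b', c) \<in> zp3 p \<and>
     2 * h = int k * int k - int k \<and>
     P dvd (int a' - (int a + int k * int b + h * int c)) \<and> P dvd (int b' - (int b + int k * int c))"
proof (induction k)
  case 0
  show ?case using assms by (rule_tac x=a in exI, rule_tac x=b in exI, rule_tac x=0 in exI) simp
next
  case (Suc k)
  then obtain a' b' h where e: "(exc_map p ^^ k) (a, b, c) = (a', b', c)" and z: "(a', b', c) \<in> zp3 p"
    and h: "2 * h = int k * int k - int k" and d1: "P dvd (int a' - (int a + int k * int b + h * int c))"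
    and d2: "P dvd (int b' - (int b + int k * int c))" by blast
  have e2: "(exc_map p ^^ Suc k) (a, b, c) = ((a' + b') mod p, (b' + c) mod p, c)" using e by simp
  have z2: "((a' + b') mod p, (b' + c) mod p, c) \<in> zp3 p" using z p3 unfolding zp3_def by simp
  have h2: "2 * (h + int k) = int (Suc k) * int (Suc k) - int (Suc k)" using h by (simp add: algebra_simps)
  have m1: "P dvd (int ((a' + b') mod p) - (int a' + int b'))" by (rule modsum)
  have m2: "P dvd (int ((b' + c) mod p) - (int b' + int c))" by (rule modsum)
  have g1: "P dvd (int ((a' + b') mod p) - (int a + int (Suc k) * int b + (h + int k) * int c))"
  proof -
    have "int ((a' + b') mod p) - (int a + int (Suc k) * int b + (h + int k) * int c)
      = (int ((a' + b') mod p) - (int a' + int b')) + (int a' - (int a + int k * int b + h * int c))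
        + (int b' - (int b + int k * int c))" by (simp add: algebra_simps)
    then show ?thesis using m1 d1 d2 by (metis dvd_add)
  qed
  have g2: "P dvd (int ((b' + c) mod p) - (int b + int (Suc k) * int c))"
  proof -
    have "int ((b' + c) mod p) - (int b + int (Suc k) * int c)
      = (int ((b' + c) mod p) - (int b' + int c)) + (int b' - (int b + int k * int c))"
      by (simp add: algebra_simps)
    then show ?thesis using m2 d2 by (metis dvd_add)
  qed
  show ?case using e2 z2 h2 g1 g2 by blast
qed


lemma tri_eq:
  assumes "(a, b, c) \<in> zp3 p" "(a', b', c') \<in> zp3 p" "P dvd (int a - int a')" "P dvd (int b - int b')"
    "c = c'"
  shows "(a, b, c) = (a', b', c')"
proof -
  have "int a = int a'" "int b = int b'"
    using assms rng_eq[of "int a" "int a'"] rng_eq[of "int b" "int b'"] unfolding zp3_def by auto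
  then show ?thesis using assms by simp
qed

definition rel :: "'a \<Rightarrow> 'a \<Rightarrow> bool" where
  "rel x y \<longleftrightarrow> (\<exists>t h. 2 * h = t * t - t \<and> P dvd (c1 y - (c1 x + t * c2 x + h * c3 x))
      \<and> P dvd (c2 y - (c2 x + t * c3 x)) \<and> P dvd (c3 y - c3 x))"

lemma orbitT:
  assumes "T \<in> Bs"
  obtains v where "v \<in> zp3 p" "\<phi> ` T = exc_orbit p v"
proof -
  have "\<phi> ` T \<in> (\<lambda>T. \<phi> ` T) ` Bs" using assms by blast
  then show ?thesis using img that by auto
qed

lemma KL:
  assumes T: "T \<in> Bs" and x: "x \<in> T"
  shows "y \<in> T \<longleftrightarrow> rel x y"
proof -
  obtain v where v: "v \<in> zp3 p" "\<phi> ` T = exc_orbit p v" using orbitT[OF T] by blast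
  obtain a b c where abc: "v = (a, b, c)" by (cases v) auto
  have "\<phi> x \<in> exc_orbit p v" using v x by blast
  then obtain i where xi: "\<phi> x = (exc_map p ^^ i) v" unfolding exc_orbit_def by blast
  obtain a1 b1 h1 where i1: "(exc_map p ^^ i) (a, b, c) = (a1, b1, c)" and
     i2: "2 * h1 = int i * int i - int i" and
     i3: "P dvd (int a1 - (int a + int i * int b + h1 * int c))" and
     i4: "P dvd (int b1 - (int b + int i * int c))"
    using iter_cong[of a b c i] v abc by blast
  have cx: "c1 x = int a1" "c2 x = int b1" "c3 x = int c"
    using xi i1 abc unfolding c1_def c2_def c3_def by auto
  show ?thesis
  proof
    assume "y \<in> T"
    then have "\<phi> y \<in> exc_orbit p v" using v by blast
    then obtain j where yj: "\<phi> y = (exc_map p ^^ j) v" unfolding exc_orbit_def by blast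
    obtain a2 b2 h2 where j1: "(exc_map p ^^ j) (a, b, c) = (a2, b2, c)" and
       j2: "2 * h2 = int j * int j - int j" and
       j3: "P dvd (int a2 - (int a + int j * int b + h2 * int c))" and
       j4: "P dvd (int b2 - (int b + int j * int c))"
      using iter_cong[of a b c j] v abc by blast
    have cy: "c1 y = int a2" "c2 y = int b2" "c3 y = int c"
      using yj j1 abc unfolding c1_def c2_def c3_def by auto
    define t where "t = int j - int i"
    define h where "h = h2 - h1 - t * int i"
    have "2 * h = t * t - t" unfolding h_def t_def using i2 j2 by (simp add: algebra_simps)
    moreover have "P dvd (c1 y - (c1 x + t * c2 x + h * c3 x))"
      unfolding cx cy h_def t_def using i3 i4 j3 by algebra
    moreover have "P dvd (c2 y - (c2 x + t * c3 x))"
      unfolding cx cy t_def using i4 j4 by algebra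
    moreover have "P dvd (c3 y - c3 x)" unfolding cx cy by simp
    ultimately show "rel x y" unfolding rel_def by blast
  next
    assume "rel x y"
    then obtain t h where r1: "2 * h = t * t - t" and r2: "P dvd (c1 y - (c1 x + t * c2 x + h * c3 x))"
      and r3: "P dvd (c2 y - (c2 x + t * c3 x))" and r4: "P dvd (c3 y - c3 x)" unfolding rel_def by blast
    define k where "k = nat ((t + int i) mod P)"
    have P0: "0 < P" using p3 by simp
    have kk: "int k = (t + int i) mod P" unfolding k_def using pos_mod_sign[OF P0] by simp
    have kd: "P dvd (int k - (t + int i))" unfolding kk by (simp add: mod_eq_dvd_iff[symmetric])
    obtain a2 b2 h2 where j1: "(exc_map p ^^ k) (a, b, c) = (a2, b2, c)" and
       jz: "(a2, b2, c) \<in> zp3 p" and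
       j2: "2 * h2 = int k * int k - int k" and
       j3: "P dvd (int a2 - (int a + int k * int b + h2 * int c))" and
       j4: "P dvd (int b2 - (int b + int k * int c))"
      using iter_cong[of a b c k] v abc by blast
    have "P dvd (2 * (h2 - (h + h1 + t * int i)))" using j2 i2 r1 kd by algebra
    then have hd: "P dvd (h2 - (h + h1 + t * int i))" by (rule cancel2)
    obtain ay by' cy where ey: "\<phi> y = (ay, by', cy)" by (cases "\<phi> y") auto
    have yz: "(ay, by', cy) \<in> zp3 p" using phi_in ey by metis
    have cy: "c1 y = int ay" "c2 y = int by'" "c3 y = int cy"
      using ey unfolding c1_def c2_def c3_def by auto
    have "int cy = int c"
      using r4 cy cx rng_eq[of "int cy" "int c"] c_range[of y] c_range[of x] by auto
    then have cc: "cy = c" by simp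
    have "(ay, by', cy) = (a2, b2, c)"
    proof (rule tri_eq[OF yz jz _ _ cc])
      show "P dvd (int ay - int a2)" using r2 i3 i4 j3 kd hd unfolding cy cx by algebra
      show "P dvd (int by' - int b2)" using r3 i4 j4 kd unfolding cy cx by algebra
    qed
    then have "\<phi> y = (exc_map p ^^ k) v" using ey j1 abc by simp
    then have "\<phi> y \<in> \<phi> ` T" using v unfolding exc_orbit_def by blast
    then show "y \<in> T" using injphi by (simp add: inj_image_mem_iff)
  qed
qed


lemma rel_sym: "rel x y \<Longrightarrow> rel y x"
proof -
  assume "rel x y"
  then obtain t h where r1: "2 * h = t * t - t" and r2: "P dvd (c1 y - (c1 x + t * c2 x + h * c3 x))"
      and r3: "P dvd (c2 y - (c2 x + t * c3 x))" and r4: "P dvd (c3 y - c3 x)" unfolding rel_def by blast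
  have "2 * (t * t - h) = (- t) * (- t) - (- t)" using r1 by (simp add: algebra_simps)
  moreover have "P dvd (c1 x - (c1 y + (- t) * c2 y + (t * t - h) * c3 y))" using r2 r3 r4 by algebra
  moreover have "P dvd (c2 x - (c2 y + (- t) * c3 y))" using r3 r4 by algebra
  moreover have "P dvd (c3 x - c3 y)" using r4 by algebra
  ultimately show "rel y x" unfolding rel_def by blast
qed

lemma sr_parts: "\<Union>Bs = UNIV" "{0} \<in> Bs" using sr unfolding is_Sring_def by simp_all

lemma cover: "\<exists>T\<in>Bs. z \<in> T" using sr_parts(1) by blast

lemma Bs_ne: "Bs \<noteq> {}" using sr_parts(2) by blast

lemma Aut_iff: "g \<in> Aut_Sring Bs \<longleftrightarrow> bij g \<and> (\<forall>x y. rel (y - x) (g y - g x))"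
proof
  assume a: "g \<in> Aut_Sring Bs"
  obtain T0 where "T0 \<in> Bs" using Bs_ne by blast
  then have "bij g" using a unfolding Aut_Sring_def digraph_aut_def by blast
  moreover have "rel (y - x) (g y - g x)" for x y
  proof -
    obtain T where T: "T \<in> Bs" "y - x \<in> T" using cover by blast
    then have "g \<in> digraph_aut (cay T)" using a unfolding Aut_Sring_def by blast
    then have "(x, y) \<in> cay T \<longleftrightarrow> (g x, g y) \<in> cay T" unfolding digraph_aut_def by blast
    then have "g y - g x \<in> T" using T unfolding cay_def by simp
    then show ?thesis using KL[OF T] by blast
  qed
  ultimately show "bij g \<and> (\<forall>x y. rel (y - x) (g y - g x))" by blast
next
  assume a: "bij g \<and> (\<forall>x y. rel (y - x) (g y - g x))"
  have "g \<in> digraph_aut (cay T)" if T: "T \<in> Bs" for T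
  proof -
    have "(x, y) \<in> cay T \<longleftrightarrow> (g x, g y) \<in> cay T" for x y
    proof
      assume "(x, y) \<in> cay T"
      then have "y - x \<in> T" unfolding cay_def by simp
      then have "g y - g x \<in> T" using KL[OF T] a by blast
      then show "(g x, g y) \<in> cay T" unfolding cay_def by simp
    next
      assume "(g x, g y) \<in> cay T"
      then have m: "g y - g x \<in> T" unfolding cay_def by simp
      have "rel (g y - g x) (y - x)" using a rel_sym by blast
      then have "y - x \<in> T" using KL[OF T m] by blast
      then show "(x, y) \<in> cay T" unfolding cay_def by simp
    qed
    then show ?thesis unfolding digraph_aut_def using a by blast
  qed
  then show "g \<in> Aut_Sring Bs" unfolding Aut_Sring_def by blast
qed

definition Am :: "int \<Rightarrow> int \<Rightarrow> 'a \<Rightarrow> 'a \<Rightarrow> 'a" where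
  "Am t h w x = pt (c1 x + t * c2 x + h * c3 x) (c2 x + t * c3 x) (c3 x) + w"

lemma c_Am: "P dvd (c1 (Am t h w x) - (c1 x + t * c2 x + h * c3 x + c1 w))"
  "P dvd (c2 (Am t h w x) - (c2 x + t * c3 x + c2 w))"
  "P dvd (c3 (Am t h w x) - (c3 x + c3 w))"
proof -
  let ?q = "pt (c1 x + t * c2 x + h * c3 x) (c2 x + t * c3 x) (c3 x)"
  have a: "P dvd (c1 (Am t h w x) - (c1 ?q + c1 w))" "P dvd (c2 (Am t h w x) - (c2 ?q + c2 w))"
     "P dvd (c3 (Am t h w x) - (c3 ?q + c3 w))" unfolding Am_def by (rule c_add)+
  have b: "P dvd (c1 ?q - (c1 x + t * c2 x + h * c3 x))" "P dvd (c2 ?q - (c2 x + t * c3 x))"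
    "P dvd (c3 ?q - c3 x)" by (rule c_pt)+
  show "P dvd (c1 (Am t h w x) - (c1 x + t * c2 x + h * c3 x + c1 w))" using a(1) b(1) by algebra
  show "P dvd (c2 (Am t h w x) - (c2 x + t * c3 x + c2 w))" using a(2) b(2) by algebra
  show "P dvd (c3 (Am t h w x) - (c3 x + c3 w))" using a(3) b(3) by algebra
qed

lemma Am_inj: "inj (Am t h w)"
proof (rule injI)
  fix x y assume e: "Am t h w x = Am t h w y"
  have d: "P dvd (c1 (Am t h w x) - c1 (Am t h w y))" "P dvd (c2 (Am t h w x) - c2 (Am t h w y))"
    "P dvd (c3 (Am t h w x) - c3 (Am t h w y))" using e by simp_all
  note cx = c_Am[of t h w x] and cy = c_Am[of t h w y]
  have 3: "P dvd (c3 x - c3 y)" using d(3) cx(3) cy(3) by algebra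
  have 2: "P dvd (c2 x - c2 y)" using d(2) cx(2) cy(2) 3 by algebra
  have 1: "P dvd (c1 x - c1 y)" using d(1) cx(1) cy(1) 3 2 by algebra
  show "x = y" using eq_iff 1 2 3 by blast
qed

lemma Am_Aut: assumes "2 * h = t * t - t" shows "Am t h w \<in> Aut_Sring Bs"
proof -
  have "bij (Am t h w)" using Am_inj fin by (simp add: bij_def finite_UNIV_inj_surj)
  moreover have "rel (y - x) (Am t h w y - Am t h w x)" for x y
  proof -
    note cx = c_Am[of t h w x] and cy = c_Am[of t h w y]
    note d = c_diff[of y x] and e = c_diff[of "Am t h w y" "Am t h w x"]
    have "P dvd (c1 (Am t h w y - Am t h w x) - (c1 (y - x) + t * c2 (y - x) + h * c3 (y - x)))"
      using cx(1) cy(1) d e(1) by algebra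
    moreover have "P dvd (c2 (Am t h w y - Am t h w x) - (c2 (y - x) + t * c3 (y - x)))"
      using cx(2) cy(2) d(2,3) e(2) by algebra
    moreover have "P dvd (c3 (Am t h w y - Am t h w x) - c3 (y - x))"
      using cx(3) cy(3) d(3) e(3) by algebra
    ultimately show ?thesis unfolding rel_def using assms by blast
  qed
  ultimately show ?thesis using Aut_iff by blast
qed


lemma not_dvd_1: "\<not> P dvd 1" using p3 by (auto dest!: zdvd_imp_le)

lemma Aut_char0:
  assumes f0: "f 0 = 0" and R: "\<And>x y. rel (y - x) (f y - f x)"
  shows "f = Am (c1 (f (pt 0 1 0))) (Hn (c1 (f (pt 0 1 0)))) 0"
proof -
  define e2 where "e2 = pt 0 1 0"
  define e3 where "e3 = pt 0 0 1"
  define k0 where "k0 = c1 (f e2)"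
  define H0 where "H0 = Hn k0"
  have H0: "2 * H0 = k0 * k0 - k0" unfolding H0_def by (rule two_Hn)
  have R0: "rel y (f y)" for y using R[where x=0 and y=y] f0 by simp
  have ce2: "P dvd (c1 e2 - 0)" "P dvd (c2 e2 - 1)" "P dvd (c3 e2 - 0)" unfolding e2_def by (rule c_pt)+
  have ce3: "P dvd (c1 e3 - 0)" "P dvd (c2 e3 - 0)" "P dvd (c3 e3 - 1)" unfolding e3_def by (rule c_pt)+
  have fe2: "P dvd (c2 (f e2) - 1)" "P dvd (c3 (f e2))"
  proof -
    obtain t h where "P dvd (c2 (f e2) - (c2 e2 + t * c3 e2))" "P dvd (c3 (f e2) - c3 e2)"
      using R0[of e2] unfolding rel_def by blast
    then show "P dvd (c2 (f e2) - 1)" "P dvd (c3 (f e2))" using ce2 by algebra+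
  qed
  have case1: "P dvd (c1 (f y) - (c1 y + k0 * c2 y + H0 * c3 y)) \<and> P dvd (c2 (f y) - (c2 y + k0 * c3 y))
     \<and> P dvd (c3 (f y) - c3 y)" if nd: "\<not> P dvd c3 y" for y
  proof -
    obtain t h where r1: "2 * h = t * t - t" and r2: "P dvd (c1 (f y) - (c1 y + t * c2 y + h * c3 y))"
      and r3: "P dvd (c2 (f y) - (c2 y + t * c3 y))" and r4: "P dvd (c3 (f y) - c3 y)"
      using R0[of y] unfolding rel_def by blast
    obtain s g where s1: "2 * g = s * s - s"
      and s2: "P dvd (c1 (f y - f e2) - (c1 (y - e2) + s * c2 (y - e2) + g * c3 (y - e2)))"
      and s3: "P dvd (c2 (f y - f e2) - (c2 (y - e2) + s * c3 (y - e2)))"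
      using R[where x=e2 and y=y] unfolding rel_def by blast
    note d1 = c_diff[of y e2] and d2 = c_diff[of "f y" "f e2"]
    have "P dvd ((t - s) * c3 y)" using s3 r3 d1(2,3) d2(2) ce2(2,3) fe2(1) by algebra
    then have ts: "P dvd (t - s)" using cancel nd by (metis dvd_mult_cancel_left mult.commute prime_dvd_mult_iff primeP)
    have "P dvd (2 * (h - g))" using r1 s1 ts by algebra
    then have hg: "P dvd (h - g)" by (rule cancel2)
    have ks: "P dvd (k0 - s)" using s2 r2 d1(1,2,3) d2(1) ce2 ts hg unfolding k0_def by algebra
    have tk: "P dvd (t - k0)" using ts ks by algebra
    have "P dvd (2 * (h - H0))" using r1 H0 tk by algebra
    then have hH: "P dvd (h - H0)" by (rule cancel2)
    have g1: "P dvd (c1 (f y) - (c1 y + k0 * c2 y + H0 * c3 y))" using r2 tk hH by algebra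
    have g2: "P dvd (c2 (f y) - (c2 y + k0 * c3 y))" using r3 tk by algebra
    show ?thesis using g1 g2 r4 by blast
  qed
  have nd3: "\<not> P dvd c3 e3"
  proof
    assume "P dvd c3 e3"
    then have "P dvd 1" using ce3(3) by algebra
    then show False using not_dvd_1 by blast
  qed
  have fe3: "P dvd (c1 (f e3) - (c1 e3 + k0 * c2 e3 + H0 * c3 e3))" "P dvd (c2 (f e3) - (c2 e3 + k0 * c3 e3))"
     "P dvd (c3 (f e3) - c3 e3)" using case1[OF nd3] by blast+
  have allc: "P dvd (c1 (f y) - (c1 y + k0 * c2 y + H0 * c3 y)) \<and> P dvd (c2 (f y) - (c2 y + k0 * c3 y))
     \<and> P dvd (c3 (f y) - c3 y)" for y
  proof (cases "P dvd c3 y")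
    case False then show ?thesis using case1 by blast
  next
    case z: True
    obtain t h where r1: "2 * h = t * t - t" and r2: "P dvd (c1 (f y) - (c1 y + t * c2 y + h * c3 y))"
      and r3: "P dvd (c2 (f y) - (c2 y + t * c3 y))" and r4: "P dvd (c3 (f y) - c3 y)"
      using R0[of y] unfolding rel_def by blast
    obtain s g where s1: "2 * g = s * s - s"
      and s2: "P dvd (c1 (f e3 - f y) - (c1 (e3 - y) + s * c2 (e3 - y) + g * c3 (e3 - y)))"
      and s3: "P dvd (c2 (f e3 - f y) - (c2 (e3 - y) + s * c3 (e3 - y)))"
      using R[where x=y and y=e3] unfolding rel_def by blast
    note d1 = c_diff[of e3 y] and d2 = c_diff[of "f e3" "f y"]
    have ks: "P dvd (k0 - s)" using s3 r3 d1(2,3) d2(2) ce3 fe3(2) z by algebra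
    have "P dvd (2 * (g - H0))" using s1 H0 ks by algebra
    then have gH: "P dvd (g - H0)" by (rule cancel2)
    have tc: "P dvd ((t - k0) * c2 y)" using s2 r2 d1 d2(1) ce3 fe3(1) z ks gH by algebra
    have g1: "P dvd (c1 (f y) - (c1 y + k0 * c2 y + H0 * c3 y))" using r2 tc z by algebra
    have g2: "P dvd (c2 (f y) - (c2 y + k0 * c3 y))" using r3 z by algebra
    show ?thesis using g1 g2 r4 by blast
  qed
  show ?thesis
  proof
    fix y
    note a = c_Am[of k0 H0 0 y]
    have "P dvd (c1 (f y) - c1 (Am k0 H0 0 y))" using allc[of y] a(1) c_zero by algebra
    moreover have "P dvd (c2 (f y) - c2 (Am k0 H0 0 y))" using allc[of y] a(2) c_zero by algebra
    moreover have "P dvd (c3 (f y) - c3 (Am k0 H0 0 y))" using allc[of y] a(3) c_zero by algebra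
    ultimately show "f y = Am (c1 (f (pt 0 1 0))) (Hn (c1 (f (pt 0 1 0)))) 0 y"
      using eq_iff unfolding k0_def H0_def e2_def by blast
  qed
qed

lemma Aut_char:
  assumes "g \<in> Aut_Sring Bs"
  shows "\<exists>t w. t \<in> {0..<P} \<and> g = Am t (Hn t) w"
proof -
  define f where "f x = g x - g 0" for x
  have R: "rel (y - x) (f y - f x)" for x y
  proof -
    have "rel (y - x) (g y - g x)" using assms Aut_iff by blast
    then show ?thesis unfolding f_def by simp
  qed
  have e: "f = Am (c1 (f (pt 0 1 0))) (Hn (c1 (f (pt 0 1 0)))) 0"
  proof -
    have f0: "f 0 = 0" by (simp add: f_def)
    show ?thesis by (rule Aut_char0[OF f0 R])
  qed
  have "g = Am (c1 (f (pt 0 1 0))) (Hn (c1 (f (pt 0 1 0)))) (g 0)"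
  proof
    fix x
    have "g x = f x + g 0" by (simp add: f_def)
    also have "\<dots> = Am (c1 (f (pt 0 1 0))) (Hn (c1 (f (pt 0 1 0)))) 0 x + g 0" using e by simp
    also have "\<dots> = Am (c1 (f (pt 0 1 0))) (Hn (c1 (f (pt 0 1 0)))) (g 0) x" unfolding Am_def by simp
    finally show "g x = Am (c1 (f (pt 0 1 0))) (Hn (c1 (f (pt 0 1 0)))) (g 0) x" .
  qed
  moreover have "c1 (f (pt 0 1 0)) \<in> {0..<P}" using c_range by simp
  ultimately show ?thesis by blast
qed


lemma pt000: "pt 0 0 0 = 0"
proof -
  have "P dvd (c1 (pt 0 0 0) - 0)" "P dvd (c2 (pt 0 0 0) - 0)" "P dvd (c3 (pt 0 0 0) - 0)"
    by (rule c_pt)+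
  then show ?thesis using eq_iff c_zero by simp
qed

lemma Am0: "Am t h w 0 = w" unfolding Am_def by (simp add: c_zero pt000)

lemma Aut_eq: "Aut_Sring Bs = (\<lambda>(t, w). Am t (Hn t) w) ` ({0..<P} \<times> UNIV)"
proof
  show "Aut_Sring Bs \<subseteq> (\<lambda>(t, w). Am t (Hn t) w) ` ({0..<P} \<times> UNIV)"
  proof
    fix g assume "g \<in> Aut_Sring Bs"
    then obtain t w where "t \<in> {0..<P}" "g = Am t (Hn t) w" using Aut_char by blast
    then show "g \<in> (\<lambda>(t, w). Am t (Hn t) w) ` ({0..<P} \<times> UNIV)" by force
  qed
  show "(\<lambda>(t, w). Am t (Hn t) w) ` ({0..<P} \<times> UNIV) \<subseteq> Aut_Sring Bs"
    using Am_Aut two_Hn by auto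
qed

lemma Am_inj2: "inj_on (\<lambda>(t, w). Am t (Hn t) w) ({0..<P} \<times> UNIV)"
proof (rule inj_onI)
  fix a b assume a: "a \<in> {0..<P} \<times> (UNIV :: 'a set)" and b: "b \<in> {0..<P} \<times> (UNIV :: 'a set)"
    and e: "(\<lambda>(t, w). Am t (Hn t) w) a = (\<lambda>(t, w). Am t (Hn t) w) b"
  obtain t w where ta: "a = (t, w)" by (cases a) auto
  obtain t' w' where tb: "b = (t', w')" by (cases b) auto
  have e2: "Am t (Hn t) w = Am t' (Hn t') w'" using e ta tb by simp
  have ww: "w = w'" using arg_cong[OF e2, of "\<lambda>f. f 0"] by (simp add: Am0)
  define e3 where "e3 = pt 0 0 1"
  have ce3: "P dvd (c2 e3 - 0)" "P dvd (c3 e3 - 1)" unfolding e3_def by (rule c_pt)+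
  have q: "c2 (Am t (Hn t) w e3) = c2 (Am t' (Hn t') w e3)" using e2 ww by simp
  have q2: "P dvd (c2 (Am t (Hn t) w e3) - (c2 e3 + t' * c3 e3 + c2 w))"
    using c_Am(2)[of t' "Hn t'" w e3] q by simp
  have "P dvd (t - t')" using c_Am(2)[of t "Hn t" w e3] q2 ce3(2) by algebra
  then have "t = t'" using rng_eq a b ta tb by auto
  then show "a = b" using ta tb ww by simp
qed

lemma card_zp3: "card (zp3 p) = p ^ 3"
proof -
  have "zp3 p = {..<p} \<times> {..<p} \<times> {..<p}" unfolding zp3_def by auto
  then show ?thesis by (simp add: card_cartesian_product power3_eq_cube)
qed

lemma card_UNIV: "card (UNIV :: 'a set) = p ^ 3"
  using bij_betw_same_card[OF bj] card_zp3 by simp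

lemma card_Aut: "card (Aut_Sring Bs) = p ^ 4"
proof -
  have "card (Aut_Sring Bs) = card ({0..<P} \<times> (UNIV :: 'a set))"
    unfolding Aut_eq by (rule card_image[OF Am_inj2])
  also have "\<dots> = p * p ^ 3" by (simp add: card_cartesian_product card_UNIV)
  also have "\<dots> = p ^ 4" by (simp add: power_Suc[symmetric] del: power_Suc)
  finally show ?thesis .
qed


lemma pt_c: "pt (c1 x) (c2 x) (c3 x) = x"
proof -
  have "P dvd (c1 (pt (c1 x) (c2 x) (c3 x)) - c1 x)" "P dvd (c2 (pt (c1 x) (c2 x) (c3 x)) - c2 x)"
    "P dvd (c3 (pt (c1 x) (c2 x) (c3 x)) - c3 x)" by (rule c_pt)+
  then show ?thesis using eq_iff by blast
qed

lemma Am00: "Am 0 0 w x = x + w" unfolding Am_def by (simp add: pt_c)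

lemma Iso_sub:
  assumes "f \<in> Iso1 Bs"
  shows "f \<in> group_aut"
proof -
  have a: "bij f \<and> f 0 = 0 \<and> (\<exists>Bs'. is_Sring Bs' \<and> (\<lambda>T. map_prod f f ` cay T) ` Bs = cay ` Bs')"
    using assms unfolding Iso1_def by simp
  then have bf: "bij f" and f0: "f 0 = 0" by simp_all
  from a obtain Bs' where im: "(\<lambda>T. map_prod f f ` cay T) ` Bs = cay ` Bs'" by blast
  have injf: "inj f" and surjf: "surj f" using bij_is_inj[OF bf] bij_is_surj[OF bf] by blast+
  have ff: "f (inv f z) = z" for z using surjf by (simp add: surj_f_inv_f)
  have fi: "inv f (f z) = z" for z using injf by (simp add: inv_f_f)
  define g where "g h x = inv f (f x + h)" for h x
  have fg: "f (g h x) = f x + h" for h x unfolding g_def by (simp add: ff)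
  have gA: "g h \<in> Aut_Sring Bs" for h
  proof -
    have "inj (g h)"
    proof (rule injI)
      fix x y assume "g h x = g h y"
      then have "f (g h x) = f (g h y)" by simp
      then have "f x = f y" unfolding fg by simp
      then show "x = y" using injf by (simp add: inj_eq)
    qed
    then have bg: "bij (g h)" using fin by (simp add: bij_def finite_UNIV_inj_surj)
    have "g h \<in> digraph_aut (cay T)" if T: "T \<in> Bs" for T
    proof -
      have "map_prod f f ` cay T \<in> cay ` Bs'" using im T by blast
      then obtain T' where T'_eq: "map_prod f f ` cay T = cay T'" by blast
      have key: "(x, y) \<in> cay T \<longleftrightarrow> f y - f x \<in> T'" for x y
      proof -
        have "inj (map_prod f f)"
        proof (rule injI)
          fix u v :: "'a \<times> 'a" assume "map_prod f f u = map_prod f f v"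
          then show "u = v" using injf by (cases u, cases v) (simp add: inj_eq)
        qed
        then have "(x, y) \<in> cay T \<longleftrightarrow> map_prod f f (x, y) \<in> map_prod f f ` cay T"
          by (rule inj_image_mem_iff[symmetric])
        also have "\<dots> \<longleftrightarrow> f y - f x \<in> T'" by (subst T'_eq) (simp add: cay_def)
        finally show ?thesis .
      qed
      have "(x, y) \<in> cay T \<longleftrightarrow> (g h x, g h y) \<in> cay T" for x y
        unfolding key fg by simp
      then show ?thesis unfolding digraph_aut_def using bg by blast
    qed
    then show ?thesis unfolding Aut_Sring_def by blast
  qed
  have "\<forall>h. \<exists>tw. fst tw \<in> {0..<P} \<and> g h = Am (fst tw) (Hn (fst tw)) (snd tw)"
    using Aut_char[OF gA] by fastforce
  then obtain F where F: "\<And>h. fst (F h) \<in> {0..<P} \<and> g h = Am (fst (F h)) (Hn (fst (F h))) (snd (F h))"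
    using choice by metis
  define tt where "tt h = fst (F h)" for h
  have tr: "tt h \<in> {0..<P}" for h using F unfolding tt_def by blast
  have gA2: "g h = Am (tt h) (Hn (tt h)) (inv f h)" for h
  proof -
    have "g h 0 = inv f h" unfolding g_def f0 by simp
    moreover have "g h 0 = snd (F h)" using F[of h] Am0 by metis
    ultimately show ?thesis using F[of h] unfolding tt_def by metis
  qed
  have comm: "g a (g b x) = g b (g a x)" for a b x unfolding g_def by (simp add: ff add_ac)
  have allz: "tt h = 0" for h
  proof (rule ccontr)
    assume nz: "tt h \<noteq> 0"
    define t0 where "t0 = tt h"
    define H0 where "H0 = Hn t0"
    define w0 where "w0 = inv f h"
    have t0r: "0 < t0" "t0 < P" using nz tr[of h] unfolding t0_def by auto
    have ndt: "\<not> P dvd t0" using t0r by (auto dest: zdvd_imp_le)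
    have rel2: "P dvd (t0 * c3 (inv f k) - tt k * c3 w0)"
      and rel1: "P dvd (t0 * c2 (inv f k) + H0 * c3 (inv f k) - (tt k * c2 w0 + Hn (tt k) * c3 w0))" for k
    proof -
      have g0: "g z 0 = inv f z" for z unfolding g_def f0 by simp
      have "g h (g k 0) = g k (g h 0)" by (rule comm)
      then have "g h (inv f k) = g k (inv f h)" unfolding g0 .
      then have e: "Am t0 H0 w0 (inv f k) = Am (tt k) (Hn (tt k)) (inv f k) w0"
        unfolding gA2 t0_def H0_def w0_def .
      note L = c_Am[of t0 H0 w0 "inv f k"]
      have R: "P dvd (c1 (Am t0 H0 w0 (inv f k)) - (c1 w0 + tt k * c2 w0 + Hn (tt k) * c3 w0 + c1 (inv f k)))"
        "P dvd (c2 (Am t0 H0 w0 (inv f k)) - (c2 w0 + tt k * c3 w0 + c2 (inv f k)))"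
        using c_Am[of "tt k" "Hn (tt k)" "inv f k" w0] unfolding e by simp_all
      show "P dvd (t0 * c3 (inv f k) - tt k * c3 w0)" using L(2) R(2) by algebra
      show "P dvd (t0 * c2 (inv f k) + H0 * c3 (inv f k) - (tt k * c2 w0 + Hn (tt k) * c3 w0))"
        using L(1) R(1) by algebra
    qed
    have same: "c2 (inv f k) = c2 (inv f k') \<and> c3 (inv f k) = c3 (inv f k')" if tk: "tt k = tt k'" for k k'
    proof -
      have "P dvd (t0 * (c3 (inv f k) - c3 (inv f k')))"
        using rel2[of k] rel2[of k'] unfolding tk by algebra
      then have d3: "P dvd (c3 (inv f k) - c3 (inv f k'))" using cancel ndt by blast
      have "P dvd (t0 * (c2 (inv f k) - c2 (inv f k')))"
        using rel1[of k] rel1[of k'] d3 unfolding tk by algebra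
      then have d2: "P dvd (c2 (inv f k) - c2 (inv f k'))" using cancel ndt by blast
      show ?thesis using d2 d3 rng_eq c_range by blast
    qed
    define W where "W = (\<lambda>k. (c2 (inv f k), c3 (inv f k))) ` UNIV"
    define G where "G s = (c2 (inv f (SOME k. tt k = s)), c3 (inv f (SOME k. tt k = s)))" for s
    have sub1: "{0..<P} \<times> {0..<P} \<subseteq> W"
    proof
      fix ij assume ij: "ij \<in> {0..<P} \<times> {0..<P}"
      obtain i j where ije: "ij = (i, j)" by (cases ij) auto
      define x where "x = pt 0 i j"
      have "P dvd (c2 x - i)" "P dvd (c3 x - j)" unfolding x_def by (rule c_pt)+
      then have "c2 x = i" "c3 x = j" using rng_eq c_range ij ije by auto
      moreover have "inv f (f x) = x" by (rule fi)
      ultimately have e: "(i, j) = (\<lambda>k. (c2 (inv f k), c3 (inv f k))) (f x)" by simp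
      show "ij \<in> W" unfolding W_def ije using e by (intro image_eqI[where f="\<lambda>k. (c2 (inv f k), c3 (inv f k))" and x="f x"]) simp_all
    qed
    have sub2: "W \<subseteq> G ` {0..<P}"
    proof
      fix z assume "z \<in> W"
      then obtain k where k: "z = (c2 (inv f k), c3 (inv f k))" unfolding W_def by blast
      define k' where "k' = (SOME k'. tt k' = tt k)"
      have "tt k' = tt k" unfolding k'_def by (rule someI) simp
      then have "c2 (inv f k') = c2 (inv f k) \<and> c3 (inv f k') = c3 (inv f k)" by (rule same)
      then have "G (tt k) = z" unfolding G_def k k'_def[symmetric] by simp
      then show "z \<in> G ` {0..<P}" using tr by blast
    qed
    have "p * p = card ({0..<P} \<times> {0..<P})" by (simp add: card_cartesian_product)
    also have "\<dots> \<le> card (G ` {0..<P})" using sub1 sub2 by (intro card_mono) auto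
    also have "\<dots> \<le> card {0..<P}" by (rule card_image_le) simp
    also have "\<dots> = p" by simp
    finally have "p * p \<le> p" .
    moreover have "3 * p \<le> p * p" using p3 by (rule mult_le_mono1)
    ultimately show False using p3 by linarith
  qed
  have "f (x + y) = f x + f y" for x y
  proof -
    have "g (f y) x = x + y" using gA2[of "f y"] allz[of "f y"] by (simp add: Am00 fi Hn_def)
    then have "f (g (f y) x) = f (x + y)" by simp
    then show ?thesis unfolding fg by simp
  qed
  then show ?thesis unfolding group_aut_def using bf by blast
qed

end

lemma gaut_Iso:
  fixes \<sigma> :: "'a::ab_group_add \<Rightarrow> 'a" and Bs :: "'a set set"
  assumes sr: "is_Sring Bs" and sg: "\<sigma> \<in> group_aut"
  shows "\<sigma> \<in> Iso1 Bs"
proof -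
  have bs: "bij \<sigma>" and ad: "\<And>x y. \<sigma> (x + y) = \<sigma> x + \<sigma> y" using sg unfolding group_aut_def by simp_all
  have inj: "inj \<sigma>" and surj: "surj \<sigma>" using bij_is_inj[OF bs] bij_is_surj[OF bs] by blast+
  have s0: "\<sigma> 0 = 0" using ad[of 0 0] by simp
  have sm: "\<sigma> (- x) = - \<sigma> x" for x using ad[of x "- x"] s0 by (simp add: eq_neg_iff_add_eq_0 add.commute)
  have sd: "\<sigma> (y - x) = \<sigma> y - \<sigma> x" for x y using ad[of y "- x"] sm[of x] by simp
  have injp: "inj (map_prod \<sigma> \<sigma>)"
  proof (rule injI)
    fix u v :: "'a \<times> 'a" assume "map_prod \<sigma> \<sigma> u = map_prod \<sigma> \<sigma> v"
    then show "u = v" using inj by (cases u, cases v) (simp add: inj_eq)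
  qed
  have im: "map_prod \<sigma> \<sigma> ` cay T = cay (\<sigma> ` T)" for T
  proof
    show "map_prod \<sigma> \<sigma> ` cay T \<subseteq> cay (\<sigma> ` T)" unfolding cay_def by (auto simp: sd[symmetric])
    show "cay (\<sigma> ` T) \<subseteq> map_prod \<sigma> \<sigma> ` cay T"
    proof
      fix uv assume a: "uv \<in> cay (\<sigma> ` T)"
      obtain u v where uv: "uv = (u, v)" by (cases uv) auto
      obtain x where x: "u = \<sigma> x" using surj by (metis surjD)
      obtain y where y: "v = \<sigma> y" using surj by (metis surjD)
      obtain t where t: "t \<in> T" "v - u = \<sigma> t" using a uv unfolding cay_def by auto
      have "\<sigma> (y - x) = \<sigma> t" using t x y sd by simp
      then have "y - x = t" using inj by (simp add: inj_eq)
      then have "(x, y) \<in> cay T" using t unfolding cay_def by simp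
      moreover have e: "uv = map_prod \<sigma> \<sigma> (x, y)" using uv x y by simp
      ultimately show "uv \<in> map_prod \<sigma> \<sigma> ` cay T"
        by (intro image_eqI[where f="map_prod \<sigma> \<sigma>" and x="(x, y)"])
    qed
  qed
  have srp: "finite (UNIV :: 'a set)" "\<forall>T\<in>Bs. T \<noteq> {}" "\<forall>T1\<in>Bs. \<forall>T2\<in>Bs. T1 \<noteq> T2 \<longrightarrow> T1 \<inter> T2 = {}"
    "\<Union>Bs = UNIV" "{0} \<in> Bs" "\<forall>T\<in>Bs. uminus ` T \<in> Bs"
    "\<forall>T1\<in>Bs. \<forall>T2\<in>Bs. \<forall>T\<in>Bs. \<forall>z\<in>T. \<forall>z'\<in>T.
          card {(x, y). x \<in> T1 \<and> y \<in> T2 \<and> x + y = z}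
        = card {(x, y). x \<in> T1 \<and> y \<in> T2 \<and> x + y = z'}"
  proof -
    note S = sr[unfolded is_Sring_def]
    show "finite (UNIV :: 'a set)" by (rule S[THEN conjunct1])
    show "\<forall>T\<in>Bs. T \<noteq> {}" by (rule S[THEN conjunct2, THEN conjunct1])
    show "\<forall>T1\<in>Bs. \<forall>T2\<in>Bs. T1 \<noteq> T2 \<longrightarrow> T1 \<inter> T2 = {}"
      by (rule S[THEN conjunct2, THEN conjunct2, THEN conjunct1])
    show "\<Union>Bs = UNIV" by (rule S[THEN conjunct2, THEN conjunct2, THEN conjunct2, THEN conjunct1])
    show "{0} \<in> Bs" by (rule S[THEN conjunct2, THEN conjunct2, THEN conjunct2, THEN conjunct2, THEN conjunct1])
    show "\<forall>T\<in>Bs. uminus ` T \<in> Bs"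
      by (rule S[THEN conjunct2, THEN conjunct2, THEN conjunct2, THEN conjunct2, THEN conjunct2, THEN conjunct1])
    show "\<forall>T1\<in>Bs. \<forall>T2\<in>Bs. \<forall>T\<in>Bs. \<forall>z\<in>T. \<forall>z'\<in>T.
          card {(x, y). x \<in> T1 \<and> y \<in> T2 \<and> x + y = z}
        = card {(x, y). x \<in> T1 \<and> y \<in> T2 \<and> x + y = z'}"
      by (rule S[THEN conjunct2, THEN conjunct2, THEN conjunct2, THEN conjunct2, THEN conjunct2, THEN conjunct2])
  qed
  define Bs' where "Bs' = (\<lambda>T. \<sigma> ` T) ` Bs"
  have cnt: "card {(x, y). x \<in> \<sigma> ` T1 \<and> y \<in> \<sigma> ` T2 \<and> x + y = \<sigma> z}
     = card {(x, y). x \<in> T1 \<and> y \<in> T2 \<and> x + y = z}" for T1 T2 z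
  proof -
    have "{(x, y). x \<in> \<sigma> ` T1 \<and> y \<in> \<sigma> ` T2 \<and> x + y = \<sigma> z}
      = map_prod \<sigma> \<sigma> ` {(x, y). x \<in> T1 \<and> y \<in> T2 \<and> x + y = z}"
    proof
      show "map_prod \<sigma> \<sigma> ` {(x, y). x \<in> T1 \<and> y \<in> T2 \<and> x + y = z}
        \<subseteq> {(x, y). x \<in> \<sigma> ` T1 \<and> y \<in> \<sigma> ` T2 \<and> x + y = \<sigma> z}" by (auto simp: ad[symmetric])
      show "{(x, y). x \<in> \<sigma> ` T1 \<and> y \<in> \<sigma> ` T2 \<and> x + y = \<sigma> z}
        \<subseteq> map_prod \<sigma> \<sigma> ` {(x, y). x \<in> T1 \<and> y \<in> T2 \<and> x + y = z}"
      proof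
        fix uv assume a: "uv \<in> {(x, y). x \<in> \<sigma> ` T1 \<and> y \<in> \<sigma> ` T2 \<and> x + y = \<sigma> z}"
        obtain u v where uv: "uv = (u, v)" by (cases uv) auto
        obtain x where x: "x \<in> T1" "u = \<sigma> x" using a uv by auto
        obtain y where y: "y \<in> T2" "v = \<sigma> y" using a uv by auto
        have "\<sigma> (x + y) = \<sigma> z" using a uv x y ad by simp
        then have "x + y = z" using inj by (simp add: inj_eq)
        then have m: "(x, y) \<in> {(x, y). x \<in> T1 \<and> y \<in> T2 \<and> x + y = z}" using x y by simp
        have e: "uv = map_prod \<sigma> \<sigma> (x, y)" using uv x y by simp
        show "uv \<in> map_prod \<sigma> \<sigma> ` {(x, y). x \<in> T1 \<and> y \<in> T2 \<and> x + y = z}"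
          by (rule image_eqI[where f="map_prod \<sigma> \<sigma>" and x="(x, y)", OF e m])
      qed
    qed
    then show ?thesis using card_image[OF inj_on_subset[OF injp subset_UNIV]] by simp
  qed
  have "is_Sring Bs'"
    unfolding is_Sring_def
  proof (intro conjI)
    show "finite (UNIV :: 'a set)" by (rule srp(1))
    show "\<forall>T\<in>Bs'. T \<noteq> {}" using srp(2) unfolding Bs'_def by blast
    show "\<forall>T1\<in>Bs'. \<forall>T2\<in>Bs'. T1 \<noteq> T2 \<longrightarrow> T1 \<inter> T2 = {}"
    proof (intro ballI impI)
      fix A B assume A: "A \<in> Bs'" and B: "B \<in> Bs'" and ne: "A \<noteq> B"
      obtain T1 where T1: "T1 \<in> Bs" "A = \<sigma> ` T1" using A unfolding Bs'_def by blast
      obtain T2 where T2: "T2 \<in> Bs" "B = \<sigma> ` T2" using B unfolding Bs'_def by blast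
      have "T1 \<inter> T2 = {}" using srp(3) T1 T2 ne by blast
      then show "A \<inter> B = {}" using T1 T2 inj by (auto simp: inj_eq)
    qed
    show "\<Union>Bs' = UNIV"
    proof -
      have "\<Union>Bs' = \<sigma> ` (\<Union>Bs)" unfolding Bs'_def by blast
      then show ?thesis using srp(4) surj by simp
    qed
    show "{0} \<in> Bs'" using srp(5) s0 unfolding Bs'_def by (metis image_empty image_eqI image_insert)
    show "\<forall>T\<in>Bs'. uminus ` T \<in> Bs'"
    proof
      fix A assume "A \<in> Bs'"
      then obtain T where T: "T \<in> Bs" "A = \<sigma> ` T" unfolding Bs'_def by blast
      have "uminus ` A = \<sigma> ` (uminus ` T)" using T sm by (auto simp: image_image)
      then show "uminus ` A \<in> Bs'" using srp(6) T unfolding Bs'_def by blast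
    qed
    show "\<forall>T1\<in>Bs'. \<forall>T2\<in>Bs'. \<forall>T\<in>Bs'. \<forall>z\<in>T. \<forall>z'\<in>T.
          card {(x, y). x \<in> T1 \<and> y \<in> T2 \<and> x + y = z}
        = card {(x, y). x \<in> T1 \<and> y \<in> T2 \<and> x + y = z'}"
    proof (intro ballI)
      fix A B C z z' assume A: "A \<in> Bs'" and B: "B \<in> Bs'" and C: "C \<in> Bs'" and z: "z \<in> C" and z': "z' \<in> C"
      obtain T1 where T1: "T1 \<in> Bs" "A = \<sigma> ` T1" using A unfolding Bs'_def by blast
      obtain T2 where T2: "T2 \<in> Bs" "B = \<sigma> ` T2" using B unfolding Bs'_def by blast
      obtain T where T: "T \<in> Bs" "C = \<sigma> ` T" using C unfolding Bs'_def by blast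
      obtain z0 where z0: "z0 \<in> T" "z = \<sigma> z0" using z T by blast
      obtain z1 where z1: "z1 \<in> T" "z' = \<sigma> z1" using z' T by blast
      have "card {(x, y). x \<in> T1 \<and> y \<in> T2 \<and> x + y = z0} = card {(x, y). x \<in> T1 \<and> y \<in> T2 \<and> x + y = z1}"
        using srp(7) T1 T2 T z0 z1 by blast
      then show "card {(x, y). x \<in> A \<and> y \<in> B \<and> x + y = z} = card {(x, y). x \<in> A \<and> y \<in> B \<and> x + y = z'}"
        using cnt[of T1 T2 z0] cnt[of T1 T2 z1] T1 T2 z0 z1 by simp
    qed
  qed
  moreover have "(\<lambda>T. map_prod \<sigma> \<sigma> ` cay T) ` Bs = cay ` Bs'" unfolding Bs'_def im by (simp add: image_image)
  ultimately show ?thesis unfolding Iso1_def using bs s0 by blast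
qed

theorem lemma2p17:
  fixes p :: nat and Bs :: "'a::ab_group_add set set"
  assumes "prime p" and "odd p"
    and "\<exists>\<phi>. bij_betw \<phi> (UNIV :: 'a set) (zp3 p) \<and> (\<forall>x y. \<phi> (x + y) = add3 p (\<phi> x) (\<phi> y))"
    and "is_Sring Bs" and "exceptional p Bs"
  shows "card (Aut_Sring Bs) = p ^ 4 \<and> Iso1 Bs = group_aut"
proof -
  obtain \<phi> where "bij_betw \<phi> (UNIV :: 'a set) (zp3 p)" "\<forall>x y. \<phi> (x + y) = add3 p (\<phi> x) (\<phi> y)"
      "(\<lambda>T. \<phi> ` T) ` Bs = exc_orbit p ` zp3 p"
    using assms(5) unfolding exceptional_def by blast
  then interpret E: exc p \<phi> Bs using assms by unfold_locales auto
  have "Iso1 Bs = group_aut" using E.Iso_sub gaut_Iso[OF assms(4)] by blast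
  then show ?thesis using E.card_Aut by blast
qed

end
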